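(* Let $(\mathcal A,\mathcal B,\mathcal E)$ and $P$ be as in the context with $P(\mathcal A\cup\mathcal B)>0$, and let $(\mathcal A^+,\mathcal A^-,\mathcal B^+,\mathcal B^-,z)$ be any output of $\mathsf{LinOpt}(\mathcal A,\mathcal B,\mathcal E,P)$. Then: 1. $P(\mathcal A^+)P(\mathcal B^+)\ge P(\mathcal A^-)P(\mathcal B^-)$. 2. If $P(\mathcal A^+)P(\mathcal B^+)=P(\mathcal A^-)P(\mathcal B^-)$, then (a) $\mathbf 1^{\top}z=P(\mathcal A\cup\mathcal B)$; (b) $\frac{P(\mathcal A)}{P(\mathcal A\cup\mathcal B)}(M^{\top}z)_v=P(\{v\})$ for all $v\in\mathcal A$; (c) $\frac{P(\mathcal B)}{P(\mathcal A\cup\mathcal B)}(M^{\top}z)_v=P(\{v\})$ for all $v\in\mathcal B$.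
   Context: $\mathcal A,\mathcal B$ are disjoint finite sets, $\mathcal E\subseteq\mathcal A\times\mathcal B$, and $P:\mathcal A\cup\mathcal B\to[0,\infty)$ is a weight function with $P(S)=\sum_{v\in S}P(\{v\})$. Let $E\in\mathbb R^{\mathcal E\times(\mathcal A\cup\mathcal B)}$ be the edge incidence matrix of the bipartite graph ($E_{e,w}=1$ if $w$ is an endpoint of $e$, else $0$) and $M=\begin{pmatrix}E\\ I\end{pmatrix}$, rows indexed by $\mathcal E\sqcup(\mathcal A\cup\mathcal B)$. Define $r\in\mathbb R^{\mathcal A\cup\mathcal B}$ by: if $P(\mathcal A)>0$ and $P(\mathcal B)>0$, $r_v=P(\{v\})P(\mathcal A\cup\mathcal B)/P(\mathcal A)$ for $v\in\mathcal A$ and $r_v=P(\{v\})P(\mathcal A\cup\mathcal B)/P(\mathcal B)$ for $v\in\mathcal B$; otherwise $r_v=P(\{v\})$. $\mathsf{LinOpt}(\mathcal A,\mathcal B,\mathcal E,P)$ takes an optimal solution $y\in\{0,1\}^{\mathcal A\cup\mathcal B}$ of the linear program $\max r^{\top}y$ s.t. $y\ge\mathbf 0$, $My\le\mathbf 1$ (an integral optimum exists) and an optimal solution $z\in\mathbb R^{\mathcal E\sqcup(\mathcal A\cup\mathcal B)}$ of the dual program $\min\mathbf 1^{\top}z$ s.t. $z\ge\mathbf 0$, $M^{\top}z\ge r$, and returns $\mathcal A^+=\{v\in\mathcal A:y_v=1\}$, $\mathcal A^-=\mathcal A\setminus\mathcal A^+$, $\mathcal B^+=\{v\in\mathcal B:y_v=1\}$,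 $\mathcal B^-=\mathcal B\setminus\mathcal B^+$, and $z$. *)

theory Defs
  imports Complex_Main
begin

text \<open>P is the weight of single vertices; P(S) is sum P S.
  Vectors indexed by the vertex set are functions 'v \<Rightarrow> real (only values on A \<union> B matter);
  vectors indexed by E disjoint-union (A \<union> B) are functions ('v \<times> 'v) + 'v \<Rightarrow> real,
  Inl e for an edge row, Inr v for an identity row.\<close>

definition wvec :: "'v set \<Rightarrow> 'v set \<Rightarrow> ('v \<Rightarrow> real) \<Rightarrow> 'v \<Rightarrow> real" where
  "wvec A B P v =
     (if sum P A > 0 \<and> sum P B > 0 then
        (if v \<in> A then P v * sum P (A \<union> B) / sum P A
         else P v * sum P (A \<union> B) / sum P B)
      else P v)"

definition incid :: "'v \<times> 'v \<Rightarrow> 'v \<Rightarrow> real" where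
  "incid e w = (if w = fst e \<or> w = snd e then 1 else 0)"

text \<open>(M y)_row for M = (E; I).\<close>
definition Mvec :: "('v \<times> 'v) set \<Rightarrow> 'v set \<Rightarrow> ('v \<Rightarrow> real) \<Rightarrow> ('v \<times> 'v) + 'v \<Rightarrow> real" where
  "Mvec E V y row = (case row of
       Inl e \<Rightarrow> (\<Sum>w\<in>V. incid e w * y w)
     | Inr u \<Rightarrow> y u)"

definition MTvec :: "('v \<times> 'v) set \<Rightarrow> 'v set \<Rightarrow> (('v \<times> 'v) + 'v \<Rightarrow> real) \<Rightarrow> 'v \<Rightarrow> real" where
  "MTvec E V z v = (\<Sum>e\<in>E. incid e v * z (Inl e)) + (\<Sum>u\<in>V. (if u = v then 1 else 0) * z (Inr u))"

definition primal_feasible :: "('v \<times> 'v) set \<Rightarrow> 'v set \<Rightarrow> ('v \<Rightarrow> real) \<Rightarrow> bool" where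
  "primal_feasible E V y \<longleftrightarrow>
     (\<forall>v\<in>V. y v \<ge> 0) \<and> (\<forall>e\<in>E. Mvec E V y (Inl e) \<le> 1) \<and> (\<forall>v\<in>V. Mvec E V y (Inr v) \<le> 1)"

definition primal_obj :: "'v set \<Rightarrow> ('v \<Rightarrow> real) \<Rightarrow> ('v \<Rightarrow> real) \<Rightarrow> real" where
  "primal_obj V r y = (\<Sum>v\<in>V. r v * y v)"

definition primal_optimal :: "('v \<times> 'v) set \<Rightarrow> 'v set \<Rightarrow> ('v \<Rightarrow> real) \<Rightarrow> ('v \<Rightarrow> real) \<Rightarrow> bool" where
  "primal_optimal E V r y \<longleftrightarrow> primal_feasible E V y \<and>
     (\<forall>y'. primal_feasible E V y' \<longrightarrow> primal_obj V r y' \<le> primal_obj V r y)"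

definition dual_feasible :: "('v \<times> 'v) set \<Rightarrow> 'v set \<Rightarrow> ('v \<Rightarrow> real) \<Rightarrow> (('v \<times> 'v) + 'v \<Rightarrow> real) \<Rightarrow> bool" where
  "dual_feasible E V r z \<longleftrightarrow>
     (\<forall>e\<in>E. z (Inl e) \<ge> 0) \<and> (\<forall>v\<in>V. z (Inr v) \<ge> 0) \<and> (\<forall>v\<in>V. MTvec E V z v \<ge> r v)"

definition dual_obj :: "('v \<times> 'v) set \<Rightarrow> 'v set \<Rightarrow> (('v \<times> 'v) + 'v \<Rightarrow> real) \<Rightarrow> real" where
  "dual_obj E V z = (\<Sum>e\<in>E. z (Inl e)) + (\<Sum>v\<in>V. z (Inr v))"

definition dual_optimal :: "('v \<times> 'v) set \<Rightarrow> 'v set \<Rightarrow> ('v \<Rightarrow> real) \<Rightarrow> (('v \<times> 'v) + 'v \<Rightarrow> real) \<Rightarrow> bool" where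
  "dual_optimal E V r z \<longleftrightarrow> dual_feasible E V r z \<and>
     (\<forall>z'. dual_feasible E V r z' \<longrightarrow> dual_obj E V z \<le> dual_obj E V z')"

definition LinOpt_output ::
  "'v set \<Rightarrow> 'v set \<Rightarrow> ('v \<times> 'v) set \<Rightarrow> ('v \<Rightarrow> real) \<Rightarrow>
   'v set \<Rightarrow> 'v set \<Rightarrow> 'v set \<Rightarrow> 'v set \<Rightarrow> (('v \<times> 'v) + 'v \<Rightarrow> real) \<Rightarrow> bool" where
  "LinOpt_output A B E P Ap Am Bp Bm z \<longleftrightarrow>
     (\<exists>y. (\<forall>v\<in>A \<union> B. y v = 0 \<or> y v = 1) \<and>
          primal_optimal E (A \<union> B) (wvec A B P) y \<and>
          dual_optimal E (A \<union> B) (wvec A B P) z \<and>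
          Ap = {v\<in>A. y v = 1} \<and> Am = A - Ap \<and>
          Bp = {v\<in>B. y v = 1} \<and> Bm = B - Bp)"

end

theory Submission
  imports Defs
begin


definition nbr :: "('v\<times>'v) set \<Rightarrow> 'v set \<Rightarrow> 'v set" where
  "nbr E X = {q. \<exists>p\<in>X. (p,q) \<in> E}"

definition hall_ok :: "'v set \<Rightarrow> 'v set \<Rightarrow> ('v\<times>'v) set \<Rightarrow> ('v \<Rightarrow> real) \<Rightarrow> bool" where
  "hall_ok A B E r \<longleftrightarrow> finite A \<and> finite B \<and> A \<inter> B = {} \<and> E \<subseteq> A \<times> B \<and>
     (\<forall>v\<in>A \<union> B. r v \<ge> 0) \<and> (\<forall>X\<subseteq>A. sum r X \<le> sum r (nbr E X))"

definition hall_sol :: "'v set \<Rightarrow> 'v set \<Rightarrow> ('v\<times>'v) set \<Rightarrow> ('v \<Rightarrow> real) \<Rightarrow> bool" where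
  "hall_sol A B E r \<longleftrightarrow> (\<exists>f. (\<forall>e\<in>E. f e \<ge> 0) \<and> (\<forall>p\<in>A. sum f {e\<in>E. fst e = p} = r p)
      \<and> (\<forall>q\<in>B. sum f {e\<in>E. snd e = q} \<le> r q))"

definition hmeas :: "'v set \<Rightarrow> 'v set \<Rightarrow> ('v \<Rightarrow> real) \<Rightarrow> nat" where
  "hmeas A B r = card A + card B + card {v\<in>A. 0 < r v} + card {v\<in>B. 0 < r v}"

lemma nbr_sub: "E \<subseteq> A \<times> B \<Longrightarrow> nbr E X \<subseteq> B"
  unfolding nbr_def by auto

lemma nbr_mono: "X \<subseteq> Y \<Longrightarrow> nbr E X \<subseteq> nbr E Y"
  unfolding nbr_def by auto

lemma nbr_Un: "nbr E (X \<union> Y) = nbr E X \<union> nbr E Y"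
  unfolding nbr_def by auto

lemma hall_split:
  fixes A B :: "'v set"
  assumes ok: "hall_ok A B E r" and X: "X \<subseteq> A" "X \<noteq> {}" "X \<noteq> A"
    and tight: "sum r (nbr E X) = sum r X"
    and IH: "\<And>(A'::'v set) B' E' r'. hall_ok A' B' E' r' \<Longrightarrow> hmeas A' B' r' < hmeas A B r \<Longrightarrow> hall_sol A' B' E' r'"
  shows "hall_sol A B E r"
proof -
  from ok have fA: "finite A" and fB: "finite B" and dis: "A \<inter> B = {}" and EAB: "E \<subseteq> A \<times> B"
    and nn: "\<forall>v\<in>A \<union> B. r v \<ge> 0" and hall: "\<forall>X\<subseteq>A. sum r X \<le> sum r (nbr E X)"
    unfolding hall_ok_def by auto
  define N where "N = nbr E X"
  have NB: "N \<subseteq> B" using nbr_sub[OF EAB] N_def by auto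
  have fN: "finite N" using NB fB finite_subset by blast
  have fX: "finite X" using X fA finite_subset by blast
  have fE: "finite E" using EAB fA fB finite_subset by blast
  define E1 where "E1 = E \<inter> (X \<times> N)"
  define E2 where "E2 = E \<inter> ((A - X) \<times> (B - N))"
  have n1: "nbr E1 Z = nbr E Z" if "Z \<subseteq> X" for Z
    using that unfolding E1_def N_def nbr_def by auto
  have n2: "nbr E2 Z = nbr E Z - N" if "Z \<subseteq> A - X" for Z
    using that EAB unfolding E2_def N_def nbr_def by auto
  have ok1: "hall_ok X N E1 r"
    unfolding hall_ok_def using fX fN X NB dis nn hall n1 unfolding E1_def by auto
  have ok2: "hall_ok (A - X) (B - N) E2 r"
    unfolding hall_ok_def
  proof (intro conjI)
    show "\<forall>Z\<subseteq>A - X. sum r Z \<le> sum r (nbr E2 Z)"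
    proof (intro allI impI)
      fix Z assume Z: "Z \<subseteq> A - X"
      have fZ: "finite Z" using Z fA finite_subset by blast
      have fNZ: "finite (nbr E Z)" using nbr_sub[OF EAB] fB finite_subset by blast
      have "Z \<union> X \<subseteq> A" using Z X by auto
      then have "sum r (Z \<union> X) \<le> sum r (nbr E (Z \<union> X))" using hall by blast
      moreover have "sum r (Z \<union> X) = sum r Z + sum r X"
        using Z fZ fX by (intro sum.union_disjoint) auto
      moreover have "nbr E (Z \<union> X) = (nbr E Z - N) \<union> N" unfolding N_def nbr_Un by auto
      moreover have "sum r ((nbr E Z - N) \<union> N) = sum r (nbr E Z - N) + sum r N"
        using fNZ fN by (intro sum.union_disjoint) auto
      ultimately have "sum r Z + sum r X \<le> sum r (nbr E2 Z) + sum r N"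
        using n2[OF Z] by simp
      then show "sum r Z \<le> sum r (nbr E2 Z)" using tight N_def by simp
    qed
  qed (use fA fB dis nn EAB in \<open>auto simp: E2_def\<close>)
  have m1: "hmeas X N r < hmeas A B r"
  proof -
    have "card X < card A" using X fA by (intro psubset_card_mono) auto
    moreover have "card N \<le> card B" using NB fB by (intro card_mono)
    moreover have "card {v\<in>X. 0 < r v} \<le> card {v\<in>A. 0 < r v}" using X fA by (intro card_mono) auto
    moreover have "card {v\<in>N. 0 < r v} \<le> card {v\<in>B. 0 < r v}" using NB fB by (intro card_mono) auto
    ultimately show ?thesis unfolding hmeas_def by linarith
  qed
  have m2: "hmeas (A - X) (B - N) r < hmeas A B r"
  proof -
    have "A - X \<subset> A" using X by blast
    then have "card (A - X) < card A" using fA by (intro psubset_card_mono) auto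
    moreover have "card (B - N) \<le> card B" using fB by (intro card_mono) auto
    moreover have "card {v\<in>A - X. 0 < r v} \<le> card {v\<in>A. 0 < r v}" using fA by (intro card_mono) auto
    moreover have "card {v\<in>B - N. 0 < r v} \<le> card {v\<in>B. 0 < r v}" using fB by (intro card_mono) auto
    ultimately show ?thesis unfolding hmeas_def by linarith
  qed
  obtain f1 where f1: "\<forall>e\<in>E1. f1 e \<ge> 0" "\<forall>p\<in>X. sum f1 {e\<in>E1. fst e = p} = r p"
      "\<forall>q\<in>N. sum f1 {e\<in>E1. snd e = q} \<le> r q"
    using IH[OF ok1 m1] unfolding hall_sol_def by blast
  obtain f2 where f2: "\<forall>e\<in>E2. f2 e \<ge> 0" "\<forall>p\<in>A - X. sum f2 {e\<in>E2. fst e = p} = r p"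
      "\<forall>q\<in>B - N. sum f2 {e\<in>E2. snd e = q} \<le> r q"
    using IH[OF ok2 m2] unfolding hall_sol_def by blast
  define f where "f e = (if e \<in> E1 then f1 e else if e \<in> E2 then f2 e else 0)" for e
  have E12: "E1 \<inter> E2 = {}" unfolding E1_def E2_def by auto
  show ?thesis unfolding hall_sol_def
  proof (intro exI[of _ f] conjI ballI)
    fix e assume "e \<in> E" then show "f e \<ge> 0" using f1 f2 unfolding f_def by auto
  next
    fix p assume p: "p \<in> A"
    show "sum f {e\<in>E. fst e = p} = r p"
    proof (cases "p \<in> X")
      case True
      have "sum f {e\<in>E. fst e = p} = sum f {e\<in>E1. fst e = p}"
        using fE True unfolding E1_def N_def nbr_def
        by (intro sum.mono_neutral_right) (auto simp: f_def E2_def)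
      also have "\<dots> = sum f1 {e\<in>E1. fst e = p}" by (intro sum.cong) (auto simp: f_def)
      finally show ?thesis using f1 True by auto
    next
      case False
      have "sum f {e\<in>E. fst e = p} = sum f {e\<in>E2. fst e = p}"
        using fE False by (intro sum.mono_neutral_right) (auto simp: f_def E2_def E1_def)
      also have "\<dots> = sum f2 {e\<in>E2. fst e = p}" using E12 by (intro sum.cong) (auto simp: f_def)
      finally show ?thesis using f2 False p by auto
    qed
  next
    fix q assume q: "q \<in> B"
    show "sum f {e\<in>E. snd e = q} \<le> r q"
    proof (cases "q \<in> N")
      case True
      have "sum f {e\<in>E. snd e = q} = sum f {e\<in>E1. snd e = q}"
        using fE True by (intro sum.mono_neutral_right) (auto simp: f_def E2_def E1_def)
      also have "\<dots> = sum f1 {e\<in>E1. snd e = q}" by (intro sum.cong) (auto simp: f_def)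
      finally show ?thesis using f1 True by auto
    next
      case False
      have "sum f {e\<in>E. snd e = q} = sum f {e\<in>E2. snd e = q}"
        using fE False EAB q unfolding E1_def E2_def N_def nbr_def
        by (intro sum.mono_neutral_right) (auto simp: f_def E2_def E1_def N_def nbr_def)
      also have "\<dots> = sum f2 {e\<in>E2. snd e = q}" using E12 by (intro sum.cong) (auto simp: f_def)
      finally show ?thesis using f2 False q by auto
    qed
  qed
qed

lemma hall_thm:
  fixes A B :: "'v set"
  shows "hall_ok A B E r \<Longrightarrow> hall_sol A B E r"
proof (induction "hmeas A B r" arbitrary: A B E r rule: less_induct)
  case less
  have IH: "\<And>(A'::'v set) B' E' r'. hall_ok A' B' E' r' \<Longrightarrow> hmeas A' B' r' < hmeas A B r \<Longrightarrow> hall_sol A' B' E' r'"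
    using less by blast
  have ok: "hall_ok A B E r" by fact
  from ok have fA: "finite A" and fB: "finite B" and dis: "A \<inter> B = {}" and EAB: "E \<subseteq> A \<times> B"
    and nn: "\<forall>v\<in>A \<union> B. r v \<ge> 0" and hall: "\<forall>X\<subseteq>A. sum r X \<le> sum r (nbr E X)"
    unfolding hall_ok_def by auto
  have fE: "finite E" using EAB fA fB finite_subset by blast
  show ?case
  proof (cases "\<exists>X. X \<subseteq> A \<and> X \<noteq> {} \<and> X \<noteq> A \<and> sum r (nbr E X) = sum r X")
    case True
    then obtain X where "X \<subseteq> A" "X \<noteq> {}" "X \<noteq> A" "sum r (nbr E X) = sum r X" by blast
    then show ?thesis using hall_split[OF ok _ _ _ _ IH] by blast
  next
    case notight: False
    show ?thesis
    proof (cases "\<exists>p\<in>A. r p > 0")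
      case False
      show ?thesis unfolding hall_sol_def
      proof (rule exI[of _ "\<lambda>_. 0"], intro conjI ballI)
        fix p assume "p \<in> A"
        then have "r p \<ge> 0" "\<not> r p > 0" using False nn by auto
        then show "sum (\<lambda>_. 0) {e\<in>E. fst e = p} = r p" by simp
      qed (use nn in auto)
    next
      case True
      then obtain p where p: "p \<in> A" "r p > 0" by blast
      have "sum r {p} \<le> sum r (nbr E {p})" using hall p by auto
      then have "sum r (nbr E {p}) > 0" using p by simp
      have "\<exists>q\<in>nbr E {p}. r q > 0"
      proof (rule ccontr)
        assume "\<not> (\<exists>q\<in>nbr E {p}. r q > 0)"
        then have "\<forall>q\<in>nbr E {p}. r q \<le> 0" by auto
        then have "sum r (nbr E {p}) \<le> 0" by (intro sum_nonpos) auto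
        then show False using \<open>sum r (nbr E {p}) > 0\<close> by simp
      qed
      then obtain q where q: "q \<in> nbr E {p}" "r q > 0" by blast
      have pq: "(p,q) \<in> E" using q unfolding nbr_def by auto
      have qB: "q \<in> B" using pq EAB by auto
      have pnq: "p \<noteq> q" using p qB dis by auto
      define XS where "XS = {X. X \<subseteq> A - {p} \<and> q \<in> nbr E X}"
      define D where "D = (\<lambda>X. sum r (nbr E X) - sum r X) ` XS"
      define T where "T = insert (r p) (insert (r q) D)"
      define t where "t = Min T"
      have "XS \<subseteq> Pow A" unfolding XS_def by blast
      then have "finite XS" using fA by (meson finite_Pow_iff finite_subset)
      then have fT: "finite T" unfolding T_def D_def by simp
      have Dpos: "d > 0" if dD: "d \<in> D" for d
      proof -
        obtain X where d: "d = sum r (nbr E X) - sum r X" and XXS: "X \<in> XS"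
          using dD unfolding D_def by (rule imageE)
        have X: "X \<subseteq> A - {p}" "q \<in> nbr E X" using XXS unfolding XS_def by simp_all
        have "X \<noteq> {}" using X(2) unfolding nbr_def by blast
        moreover have "X \<noteq> A" using X(1) p by blast
        moreover have XA: "X \<subseteq> A" using X(1) by blast
        ultimately have "sum r (nbr E X) \<noteq> sum r X" using notight by blast
        moreover have "sum r X \<le> sum r (nbr E X)" using hall XA by blast
        ultimately show ?thesis using d by auto
      qed
      have tpos: "t > 0" unfolding t_def using fT Dpos p q
        by (subst Min_gr_iff) (auto simp: T_def)
      have tp: "t \<le> r p" unfolding t_def by (rule Min_le[OF fT]) (simp add: T_def)
      have tq: "t \<le> r q" unfolding t_def by (rule Min_le[OF fT]) (simp add: T_def)
      have tD: "t \<le> d" if "d \<in> D" for d unfolding t_def by (rule Min_le[OF fT]) (use that in \<open>simp add: T_def\<close>)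
      define r' where "r' v = r v - (if v = p then t else 0) - (if v = q then t else 0)" for v
      have sumr': "sum r' Y = sum r Y - (if p \<in> Y then t else 0) - (if q \<in> Y then t else 0)"
        if "finite Y" for Y
        using that unfolding r'_def by (simp add: sum_subtractf sum.delta)
      have r'le: "r' v \<le> r v" for v unfolding r'_def using tpos by auto
      have ok': "hall_ok A B E r'"
        unfolding hall_ok_def
      proof (intro conjI)
        show "\<forall>v\<in>A \<union> B. 0 \<le> r' v" using nn tp tq pnq unfolding r'_def by auto
        show "\<forall>X\<subseteq>A. sum r' X \<le> sum r' (nbr E X)"
        proof (intro allI impI)
          fix X assume X: "X \<subseteq> A"
          have fX: "finite X" using X fA finite_subset by blast
          have NX: "nbr E X \<subseteq> B" using nbr_sub[OF EAB] .
          have fNX: "finite (nbr E X)" using NX fB finite_subset by blast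
          have qX: "q \<notin> X" using X qB dis by auto
          have pN: "p \<notin> nbr E X" using NX p dis by auto
          have h: "sum r X \<le> sum r (nbr E X)" using hall X by auto
          show "sum r' X \<le> sum r' (nbr E X)"
          proof (cases "p \<in> X")
            case True
            then have "q \<in> nbr E X" using pq unfolding nbr_def by auto
            then show ?thesis using sumr'[OF fX] sumr'[OF fNX] True qX pN h by simp
          next
            case pX: False
            show ?thesis
            proof (cases "q \<in> nbr E X")
              case True
              then have "X \<in> XS" unfolding XS_def using X pX by auto
              then have "t \<le> sum r (nbr E X) - sum r X" using tD unfolding D_def by auto
              then show ?thesis using sumr'[OF fX] sumr'[OF fNX] True qX pN pX by simp
            next
              case False
              then show ?thesis using sumr'[OF fX] sumr'[OF fNX] qX pN pX h by simp
            qed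
          qed
        qed
      qed (use fA fB dis EAB in auto)
      have posA: "{v\<in>A. 0 < r' v} \<subseteq> {v\<in>A. 0 < r v}"
      proof
        fix v assume "v \<in> {v\<in>A. 0 < r' v}"
        then show "v \<in> {v\<in>A. 0 < r v}" using r'le[of v] by auto
      qed
      have posB: "{v\<in>B. 0 < r' v} \<subseteq> {v\<in>B. 0 < r v}"
      proof
        fix v assume "v \<in> {v\<in>B. 0 < r' v}"
        then show "v \<in> {v\<in>B. 0 < r v}" using r'le[of v] by auto
      qed
      have cA: "card {v\<in>A. 0 < r' v} \<le> card {v\<in>A. 0 < r v}" using posA fA by (intro card_mono) auto
      have cB: "card {v\<in>B. 0 < r' v} \<le> card {v\<in>B. 0 < r v}" using posB fB by (intro card_mono) auto
      have mle: "hmeas A B r' \<le> hmeas A B r" using cA cB unfolding hmeas_def by linarith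
      have sol': "hall_sol A B E r'"
      proof (cases "r' p = 0 \<or> r' q = 0")
        case True
        have "hmeas A B r' < hmeas A B r"
        proof (cases "r' p = 0")
          case True
          have "p \<notin> {v\<in>A. 0 < r' v}" "p \<in> {v\<in>A. 0 < r v}" using True p by auto
          then have "{v\<in>A. 0 < r' v} \<subset> {v\<in>A. 0 < r v}" using posA by blast
          then have "card {v\<in>A. 0 < r' v} < card {v\<in>A. 0 < r v}" using fA by (intro psubset_card_mono) auto
          then show ?thesis using cB unfolding hmeas_def by linarith
        next
          case False
          then have "r' q = 0" using \<open>r' p = 0 \<or> r' q = 0\<close> by auto
          then have "q \<notin> {v\<in>B. 0 < r' v}" "q \<in> {v\<in>B. 0 < r v}" using qB q by auto
          then have "{v\<in>B. 0 < r' v} \<subset> {v\<in>B. 0 < r v}" using posB by blast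
          then have "card {v\<in>B. 0 < r' v} < card {v\<in>B. 0 < r v}" using fB by (intro psubset_card_mono) auto
          then show ?thesis using cA unfolding hmeas_def by linarith
        qed
        then show ?thesis using IH ok' by blast
      next
        case False
        then have "t \<noteq> r p" "t \<noteq> r q" unfolding r'_def using pnq by auto
        moreover have "t \<in> T" unfolding t_def using fT by (intro Min_in) (auto simp: T_def)
        ultimately have "t \<in> D" unfolding T_def by auto
        then obtain X where X: "X \<subseteq> A - {p}" "q \<in> nbr E X" and td: "t = sum r (nbr E X) - sum r X"
          unfolding D_def XS_def by blast
        have fX: "finite X" using X fA finite_subset by blast
        have NX: "nbr E X \<subseteq> B" using nbr_sub[OF EAB] .
        have fNX: "finite (nbr E X)" using NX fB finite_subset by blast
        have qX: "q \<notin> X" using X qB dis by auto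
        have pN: "p \<notin> nbr E X" using NX p dis by auto
        have tight': "sum r' (nbr E X) = sum r' X"
          using sumr'[OF fX] sumr'[OF fNX] qX pN X td by auto
        have "X \<noteq> {}" using X unfolding nbr_def by auto
        moreover have "X \<noteq> A" using X p by auto
        moreover have "X \<subseteq> A" using X by auto
        ultimately show ?thesis
        proof (intro hall_split[OF ok' _ _ _ tight'])
          fix A' :: "'v set" and B' E' r'' assume a: "hall_ok A' B' E' r''" "hmeas A' B' r'' < hmeas A B r'"
          then have "hmeas A' B' r'' < hmeas A B r" using mle by linarith
          then show "hall_sol A' B' E' r''" using IH a(1) by blast
        qed
      qed
      then obtain f' where f': "\<forall>e\<in>E. f' e \<ge> 0" "\<forall>p\<in>A. sum f' {e\<in>E. fst e = p} = r' p"
        "\<forall>q\<in>B. sum f' {e\<in>E. snd e = q} \<le> r' q"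
        unfolding hall_sol_def by blast
      define f where "f e = f' e + (if e = (p,q) then t else 0)" for e
      show ?thesis unfolding hall_sol_def
      proof (intro exI[of _ f] conjI ballI)
        fix e assume "e \<in> E" then show "f e \<ge> 0" using f' tpos unfolding f_def by auto
      next
        fix p' assume p': "p' \<in> A"
        have fin: "finite {e\<in>E. fst e = p'}" using fE by auto
        have "sum f {e\<in>E. fst e = p'} = sum f' {e\<in>E. fst e = p'} + sum (\<lambda>e. if e = (p,q) then t else 0) {e\<in>E. fst e = p'}"
          unfolding f_def by (rule sum.distrib)
        also have "sum (\<lambda>e. if e = (p,q) then t else 0) {e\<in>E. fst e = p'} = (if (p,q) \<in> {e\<in>E. fst e = p'} then t else 0)"
          using fin by (rule sum.delta)
        also have "(if (p,q) \<in> {e\<in>E. fst e = p'} then t else 0) = (if p' = p then t else 0)" using pq by auto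
        finally have "sum f {e\<in>E. fst e = p'} = sum f' {e\<in>E. fst e = p'} + (if p' = p then t else 0)" .
        then show "sum f {e\<in>E. fst e = p'} = r p'" using f' p' qB dis unfolding r'_def by auto
      next
        fix q' assume q': "q' \<in> B"
        have fin: "finite {e\<in>E. snd e = q'}" using fE by auto
        have "sum f {e\<in>E. snd e = q'} = sum f' {e\<in>E. snd e = q'} + sum (\<lambda>e. if e = (p,q) then t else 0) {e\<in>E. snd e = q'}"
          unfolding f_def by (rule sum.distrib)
        also have "sum (\<lambda>e. if e = (p,q) then t else 0) {e\<in>E. snd e = q'} = (if (p,q) \<in> {e\<in>E. snd e = q'} then t else 0)"
          using fin by (rule sum.delta)
        also have "(if (p,q) \<in> {e\<in>E. snd e = q'} then t else 0) = (if q' = q then t else 0)" using pq by auto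
        finally have "sum f {e\<in>E. snd e = q'} = sum f' {e\<in>E. snd e = q'} + (if q' = q then t else 0)" .
        moreover have "q' \<noteq> p" using q' p dis by auto
        moreover have "sum f' {e\<in>E. snd e = q'} \<le> r' q'" using f'(3) q' by auto
        ultimately show "sum f {e\<in>E. snd e = q'} \<le> r q'" unfolding r'_def by auto
      qed
    qed
  qed
qed



lemma MTvec_simp:
  assumes "finite V" "v \<in> V"
  shows "MTvec E V z v = (\<Sum>e\<in>E. incid e v * z (Inl e)) + z (Inr v)"
proof -
  have "(\<Sum>u\<in>V. (if u = v then 1 else 0) * z (Inr u)) = (\<Sum>u\<in>V. if u = v then z (Inr u) else 0)"
    by (rule sum.cong) auto
  also have "\<dots> = z (Inr v)" using assms by (simp add: sum.delta)
  finally show ?thesis unfolding MTvec_def by simp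
qed

lemma Mvec_edge:
  assumes "finite V" "fst e \<in> V" "snd e \<in> V" "fst e \<noteq> snd e"
  shows "Mvec E V y (Inl e) = y (fst e) + y (snd e)"
proof -
  have "(\<Sum>w\<in>V. incid e w * y w) = (\<Sum>w\<in>V. (if w = fst e then y w else 0) + (if w = snd e then y w else 0))"
    using assms(4) by (intro sum.cong) (auto simp: incid_def)
  also have "\<dots> = y (fst e) + y (snd e)" using assms by (simp add: sum.distrib sum.delta)
  finally show ?thesis unfolding Mvec_def by simp
qed

lemma MT_le_dual:
  assumes fV: "finite V" and fE: "finite E" and y: "primal_feasible E V y" and z: "dual_feasible E V r z"
  shows "(\<Sum>v\<in>V. MTvec E V z v * y v) \<le> dual_obj E V z"
proof -
  have "(\<Sum>v\<in>V. MTvec E V z v * y v) =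
        (\<Sum>v\<in>V. (\<Sum>e\<in>E. incid e v * z (Inl e)) * y v) + (\<Sum>v\<in>V. z (Inr v) * y v)"
    using fV by (simp add: MTvec_simp distrib_right sum.distrib)
  also have "(\<Sum>v\<in>V. (\<Sum>e\<in>E. incid e v * z (Inl e)) * y v) = (\<Sum>e\<in>E. z (Inl e) * Mvec E V y (Inl e))"
    unfolding Mvec_def by (simp add: sum_distrib_right sum_distrib_left sum.swap[of _ V E] mult_ac)
  also have "\<dots> \<le> (\<Sum>e\<in>E. z (Inl e))"
    using y z by (intro sum_mono) (auto simp: primal_feasible_def dual_feasible_def intro: mult_left_le)
  also have "(\<Sum>v\<in>V. z (Inr v) * y v) \<le> (\<Sum>v\<in>V. z (Inr v))"
    using y z by (intro sum_mono) (auto simp: primal_feasible_def dual_feasible_def Mvec_def intro: mult_right_le_one_le)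
  finally show ?thesis unfolding dual_obj_def by simp
qed

lemma primal_le_MT:
  assumes "primal_feasible E V y" and "dual_feasible E V r z"
  shows "primal_obj V r y \<le> (\<Sum>v\<in>V. MTvec E V z v * y v)"
  unfolding primal_obj_def using assms
  by (intro sum_mono mult_right_mono) (auto simp: primal_feasible_def dual_feasible_def Mvec_def)

lemma CS:
  assumes fV: "finite V" and fE: "finite E" and y: "primal_feasible E V y" and z: "dual_feasible E V r z"
    and eq: "dual_obj E V z \<le> primal_obj V r y" and v: "v \<in> V" "y v = 1"
  shows "MTvec E V z v = r v"
proof -
  have nn: "\<And>w. w \<in> V \<Longrightarrow> 0 \<le> (MTvec E V z w - r w) * y w"
    using y z by (auto simp: primal_feasible_def dual_feasible_def Mvec_def)
  have "(\<Sum>w\<in>V. (MTvec E V z w - r w) * y w) = (\<Sum>w\<in>V. MTvec E V z w * y w) - primal_obj V r y"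
    unfolding primal_obj_def by (simp add: left_diff_distrib sum_subtractf)
  also have "\<dots> \<le> 0" using MT_le_dual[OF fV fE y z] eq by linarith
  finally have "(\<Sum>w\<in>V. (MTvec E V z w - r w) * y w) = 0"
    using sum_nonneg[of V "\<lambda>w. (MTvec E V z w - r w) * y w", OF nn] by linarith
  then have "\<forall>w\<in>V. (MTvec E V z w - r w) * y w = 0" by (subst (asm) sum_nonneg_eq_0_iff[OF fV]) (use nn in auto)
  then show ?thesis using v by auto
qed

lemma ind_feas:
  assumes fA: "finite A" and fB: "finite B" and dis: "A \<inter> B = {}" and EAB: "E \<subseteq> A \<times> B"
    and I: "\<forall>e\<in>E. \<not> (fst e \<in> I \<and> snd e \<in> I)"
  shows "primal_feasible E (A \<union> B) (\<lambda>v. if v \<in> I then 1 else 0)"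
  unfolding primal_feasible_def
proof (intro conjI ballI)
  fix e assume e: "e \<in> E"
  then have "fst e \<in> A" "snd e \<in> B" using EAB by auto
  then have "Mvec E (A \<union> B) (\<lambda>v. if v \<in> I then 1 else 0) (Inl e) =
     (if fst e \<in> I then 1 else 0) + (if snd e \<in> I then 1 else 0)"
    using fA fB dis by (intro Mvec_edge) auto
  then show "Mvec E (A \<union> B) (\<lambda>v. if v \<in> I then 1 else 0) (Inl e) \<le> 1" using I e by auto
qed (auto simp: Mvec_def)

lemma ind_obj:
  assumes "finite V" "I \<subseteq> V"
  shows "primal_obj V r (\<lambda>v. if v \<in> I then 1 else 0) = sum r I"
proof -
  have "primal_obj V r (\<lambda>v. if v \<in> I then 1 else 0) = (\<Sum>v\<in>V. if v \<in> I then r v else 0)"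
    unfolding primal_obj_def by (intro sum.cong) auto
  also have "\<dots> = sum r (V \<inter> I)" using assms by (simp add: sum.inter_restrict)
  also have "V \<inter> I = I" using assms by auto
  finally show ?thesis .
qed



theorem lemma4:
  fixes A B :: "'v set" and E :: "('v \<times> 'v) set" and P :: "'v \<Rightarrow> real"
    and Ap Am Bp Bm :: "'v set" and z :: "('v \<times> 'v) + 'v \<Rightarrow> real"
  assumes "finite A" and "finite B" and "A \<inter> B = {}" and "E \<subseteq> A \<times> B"
    and "\<forall>v\<in>A \<union> B. P v \<ge> 0"
    and "sum P (A \<union> B) > 0"
    and "LinOpt_output A B E P Ap Am Bp Bm z"
  shows "sum P Ap * sum P Bp \<ge> sum P Am * sum P Bm \<and>
         (sum P Ap * sum P Bp = sum P Am * sum P Bm \<longrightarrow>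
           dual_obj E (A \<union> B) z = sum P (A \<union> B) \<and>
           (\<forall>v\<in>A. sum P A / sum P (A \<union> B) * MTvec E (A \<union> B) z v = P v) \<and>
           (\<forall>v\<in>B. sum P B / sum P (A \<union> B) * MTvec E (A \<union> B) z v = P v))"
proof -
  note fA = assms(1) and fB = assms(2) and dis = assms(3) and EAB = assms(4) and Pnn = assms(5)
  define V where "V = A \<union> B"
  define S where "S = sum P (A \<union> B)"
  define a where "a = sum P A"
  define b where "b = sum P B"
  define r where "r = wvec A B P"
  have Spos: "S > 0" using assms(6) S_def by simp
  have fV: "finite V" using fA fB V_def by simp
  have fE: "finite E" using EAB fA fB finite_subset by blast
  have Sab: "S = a + b" unfolding S_def a_def b_def using fA fB dis by (simp add: sum.union_disjoint)
  have a0: "a \<ge> 0" unfolding a_def using Pnn by (intro sum_nonneg) auto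
  have b0: "b \<ge> 0" unfolding b_def using Pnn by (intro sum_nonneg) auto
  obtain y where y01: "\<forall>v\<in>A \<union> B. y v = 0 \<or> y v = 1" and yopt: "primal_optimal E V r y"
    and zopt: "dual_optimal E V r z" and Apd: "Ap = {v\<in>A. y v = 1}" and Amd: "Am = A - Ap"
    and Bpd: "Bp = {v\<in>B. y v = 1}" and Bmd: "Bm = B - Bp"
    using assms(7) unfolding LinOpt_output_def V_def r_def by blast
  have yfeas: "primal_feasible E V y" and ymax: "\<And>y'. primal_feasible E V y' \<Longrightarrow> primal_obj V r y' \<le> primal_obj V r y"
    using yopt unfolding primal_optimal_def by auto
  have zfeas: "dual_feasible E V r z" and zmin: "\<And>z'. dual_feasible E V r z' \<Longrightarrow> dual_obj E V z \<le> dual_obj E V z'"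
    using zopt unfolding dual_optimal_def by auto
  have ApA: "Ap \<subseteq> A" and BpB: "Bp \<subseteq> B" using Apd Bpd by auto
  have fAp: "finite Ap" and fBp: "finite Bp" using ApA BpB fA fB finite_subset by blast+
  define x where "x = sum P Ap"
  define u where "u = sum P Bp"
  have xm: "sum P Am = a - x" unfolding Amd a_def x_def using fA ApA by (simp add: sum_diff)
  have um: "sum P Bm = b - u" unfolding Bmd b_def u_def using fB BpB by (simp add: sum_diff)
  have x0: "0 \<le> x" "x \<le> a" unfolding x_def a_def using Pnn ApA fA
    by (auto intro!: sum_nonneg sum_mono2)
  have u0: "0 \<le> u" "u \<le> b" unfolding u_def b_def using Pnn BpB fB
    by (auto intro!: sum_nonneg sum_mono2)
  have OPT: "primal_obj V r y = sum r Ap + sum r Bp"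
  proof -
    have "primal_obj V r y = primal_obj V r (\<lambda>v. if v \<in> Ap \<union> Bp then 1 else 0)"
      unfolding primal_obj_def using y01 Apd Bpd V_def by (intro sum.cong) auto
    also have "\<dots> = sum r (Ap \<union> Bp)" using ApA BpB fV V_def by (intro ind_obj) auto
    also have "\<dots> = sum r Ap + sum r Bp" using fAp fBp ApA BpB dis by (intro sum.union_disjoint) auto
    finally show ?thesis .
  qed
  have feasA: "primal_feasible E V (\<lambda>v. if v \<in> A then 1 else 0)"
    unfolding V_def using fA fB dis EAB by (intro ind_feas) auto
  have feasB: "primal_feasible E V (\<lambda>v. if v \<in> B then 1 else 0)"
    unfolding V_def using fA fB dis EAB by (intro ind_feas) auto
  have objA: "primal_obj V r (\<lambda>v. if v \<in> A then 1 else 0) = sum r A" using fV V_def by (intro ind_obj) auto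
  have objB: "primal_obj V r (\<lambda>v. if v \<in> B then 1 else 0) = sum r B" using fV V_def by (intro ind_obj) auto
  have rA: "r v = P v * (S / a)" if "v \<in> A" "a > 0" "b > 0" for v
    using that unfolding r_def wvec_def S_def a_def b_def by simp
  have rB: "r v = P v * (S / b)" if "v \<in> B" "a > 0" "b > 0" for v
    using that dis unfolding r_def wvec_def S_def a_def b_def by auto
  have rP: "r v = P v" if "\<not> (a > 0 \<and> b > 0)" for v
    using that unfolding r_def wvec_def S_def a_def b_def by auto
  have sumrA: "sum r Y = sum P Y * (S / a)" if "Y \<subseteq> A" "a > 0" "b > 0" for Y
  proof -
    have "sum r Y = sum (\<lambda>v. P v * (S / a)) Y" using that rA by (intro sum.cong) auto
    also have "\<dots> = sum P Y * (S / a)" by (rule sum_distrib_right[symmetric])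
    finally show ?thesis .
  qed
  have sumrB: "sum r Y = sum P Y * (S / b)" if "Y \<subseteq> B" "a > 0" "b > 0" for Y
  proof -
    have "sum r Y = sum (\<lambda>v. P v * (S / b)) Y" using that rB by (intro sum.cong) auto
    also have "\<dots> = sum P Y * (S / b)" by (rule sum_distrib_right[symmetric])
    finally show ?thesis .
  qed
  have rAS: "sum r A = S" if "a > 0"
  proof (cases "b > 0")
    case True then show ?thesis using sumrA[of A] that a_def by simp
  next
    case False then have "b = 0" using b0 by simp
    then show ?thesis using rP False Sab a_def by simp
  qed
  have rBS: "sum r B = S" if "b > 0"
  proof (cases "a > 0")
    case True then show ?thesis using sumrB[of B] that b_def by simp
  next
    case False then have "a = 0" using a0 by simp
    then show ?thesis using rP False Sab b_def by simp
  qed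
  have OPTge: "primal_obj V r y \<ge> S"
  proof (cases "a > 0")
    case True then show ?thesis using ymax[OF feasA] objA rAS by simp
  next
    case False then have "b > 0" using a0 Sab Spos by simp
    then show ?thesis using ymax[OF feasB] objB rBS by simp
  qed
  have part1: "x * u \<ge> (a - x) * (b - u)"
  proof (cases "a > 0 \<and> b > 0")
    case True
    then have "S \<le> x * (S / a) + u * (S / b)" using OPTge OPT sumrA[OF ApA] sumrB[OF BpB] x_def u_def by simp
    moreover have "x * (S / a) + u * (S / b) = S * (x / a + u / b)" by (simp add: algebra_simps)
    ultimately have "S * 1 \<le> S * (x / a + u / b)" by simp
    then have "1 \<le> x / a + u / b" using Spos mult_le_cancel_left_pos by blast
    then have "a * b \<le> x * b + u * a" using True by (simp add: field_simps)
    then show ?thesis by (simp add: algebra_simps)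
  next
    case False
    then have "a = 0 \<or> b = 0" using a0 b0 by auto
    then show ?thesis using x0 u0 by auto
  qed
  show ?thesis
  proof (intro conjI impI)
    show "sum P Am * sum P Bm \<le> sum P Ap * sum P Bp" using part1 xm um x_def u_def by simp
  next
    assume eq0: "sum P Ap * sum P Bp = sum P Am * sum P Bm"
    then have eq: "x * u = (a - x) * (b - u)" using xm um x_def u_def by simp
    have ex: "\<exists>z'. dual_feasible E V r z' \<and> dual_obj E V z' = S"
    proof (cases "a > 0 \<and> b > 0")
      case False
      define z' :: "('v \<times> 'v) + 'v \<Rightarrow> real" where "z' = (\<lambda>w. case w of Inl e \<Rightarrow> 0 | Inr v \<Rightarrow> P v)"
      have "dual_feasible E V r z'"
        unfolding dual_feasible_def using Pnn V_def fV rP[OF False]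
        by (auto simp: z'_def MTvec_simp)
      moreover have "dual_obj E V z' = S" unfolding dual_obj_def z'_def S_def V_def by simp
      ultimately show ?thesis by blast
    next
      case True
      have "a * b = x * b + u * a" using eq by (simp add: algebra_simps)
      moreover have "x / a + u / b = (x * b + u * a) / (a * b)" using True by (simp add: field_simps)
      moreover have "a * b > 0" using True by simp
      ultimately have "x / a + u / b = 1" by simp
      moreover have "primal_obj V r y = x * (S / a) + u * (S / b)"
        using OPT sumrA[OF ApA] sumrB[OF BpB] True x_def u_def by simp
      moreover have "x * (S / a) + u * (S / b) = S * (x / a + u / b)" by (simp add: algebra_simps)
      ultimately have OPTS: "primal_obj V r y = S" by simp
      have rnn: "\<forall>v\<in>A \<union> B. 0 \<le> r v"
      proof
        fix v assume v: "v \<in> A \<union> B"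
        have "0 \<le> P v" using Pnn v by auto
        moreover have "0 \<le> S / a" "0 \<le> S / b" using Spos True by auto
        ultimately show "0 \<le> r v"
        proof (cases "v \<in> A")
          case True
          then show ?thesis using rA[of v] \<open>0 < a \<and> 0 < b\<close> \<open>0 \<le> P v\<close> \<open>0 \<le> S / a\<close>
            by (simp only:) (rule mult_nonneg_nonneg)
        next
          case False
          then have "v \<in> B" using v by auto
          then show ?thesis using rB[of v] \<open>0 < a \<and> 0 < b\<close> \<open>0 \<le> P v\<close> \<open>0 \<le> S / b\<close>
            by (simp only:) (rule mult_nonneg_nonneg)
        qed
      qed
      have hall: "hall_ok A B E r"
        unfolding hall_ok_def
      proof (intro conjI allI impI)
        fix X assume X: "X \<subseteq> A"
        define N where "N = nbr E X"
        have NB: "N \<subseteq> B" using nbr_sub[OF EAB] N_def by auto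
        define I where "I = X \<union> (B - N)"
        have IF: "primal_feasible E V (\<lambda>v. if v \<in> I then 1 else 0)"
          unfolding V_def
        proof (intro ind_feas[OF fA fB dis EAB] ballI)
          fix e assume e: "e \<in> E"
          then have "fst e \<in> A" "snd e \<in> B" using EAB by auto
          show "\<not> (fst e \<in> I \<and> snd e \<in> I)"
          proof
            assume "fst e \<in> I \<and> snd e \<in> I"
            then have "fst e \<in> X" "snd e \<in> B - N" using \<open>fst e \<in> A\<close> \<open>snd e \<in> B\<close> dis X unfolding I_def by auto
            moreover have "snd e \<in> N" if "fst e \<in> X"
            proof -
              have "(fst e, snd e) \<in> E" using e by simp
              then show ?thesis using that unfolding N_def nbr_def by blast
            qed
            ultimately show False by auto
          qed
        qed
        then have "primal_obj V r (\<lambda>v. if v \<in> I then 1 else 0) \<le> primal_obj V r y" by (rule ymax)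
        then have "primal_obj V r (\<lambda>v. if v \<in> I then 1 else 0) \<le> S" using OPTS by simp
        moreover have "primal_obj V r (\<lambda>v. if v \<in> I then 1 else 0) = sum r I"
          using fV X NB V_def I_def by (intro ind_obj) auto
        moreover have "sum r I = sum r X + sum r (B - N)"
          unfolding I_def using X dis fA fB by (intro sum.union_disjoint) (auto intro: finite_subset)
        moreover have "sum r (B - N) = sum r B - sum r N" using fB NB by (simp add: sum_diff)
        ultimately show "sum r X \<le> sum r (nbr E X)" using rBS True N_def by simp
      qed (use fA fB dis EAB rnn in auto)
      obtain f where f: "\<forall>e\<in>E. f e \<ge> 0" "\<forall>p\<in>A. sum f {e\<in>E. fst e = p} = r p"
          "\<forall>q\<in>B. sum f {e\<in>E. snd e = q} \<le> r q"
        using hall_thm[OF hall] unfolding hall_sol_def by blast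
      have totA: "(\<Sum>p\<in>A. sum f {e\<in>E. fst e = p}) = sum f E"
        using fE fA EAB by (intro sum.group) auto
      have totB: "(\<Sum>q\<in>B. sum f {e\<in>E. snd e = q}) = sum f E"
        using fE fB EAB by (intro sum.group) auto
      have sfE: "sum f E = S" using totA f(2) rAS True by simp
      have "(\<Sum>q\<in>B. r q - sum f {e\<in>E. snd e = q}) = 0"
        using totB sfE rBS True by (simp add: sum_subtractf)
      then have fB: "\<forall>q\<in>B. sum f {e\<in>E. snd e = q} = r q"
        by (subst (asm) sum_nonneg_eq_0_iff[OF fB]) (use f(3) in auto)
      define z' :: "('v \<times> 'v) + 'v \<Rightarrow> real" where "z' = (\<lambda>w. case w of Inl e \<Rightarrow> f e | Inr v \<Rightarrow> 0)"
      have MTz': "MTvec E V z' v = r v" if v: "v \<in> V" for v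
      proof -
        have "MTvec E V z' v = (\<Sum>e\<in>E. incid e v * f e)" using MTvec_simp[OF fV v] z'_def by simp
        also have "\<dots> = r v"
        proof (cases "v \<in> A")
          case True
          have "(\<Sum>e\<in>E. incid e v * f e) = (\<Sum>e\<in>E. if fst e = v then f e else 0)"
            using EAB dis True by (intro sum.cong) (auto simp: incid_def)
          also have "\<dots> = sum f {e\<in>E. fst e = v}" using fE by (simp add: sum.inter_filter)
          finally show ?thesis using f(2) True by simp
        next
          case False
          then have vB: "v \<in> B" using v V_def by auto
          have "(\<Sum>e\<in>E. incid e v * f e) = (\<Sum>e\<in>E. if snd e = v then f e else 0)"
            using EAB dis vB by (intro sum.cong) (auto simp: incid_def)
          also have "\<dots> = sum f {e\<in>E. snd e = v}" using fE by (simp add: sum.inter_filter)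
          finally show ?thesis using fB vB by simp
        qed
        finally show ?thesis .
      qed
      have "dual_feasible E V r z'" unfolding dual_feasible_def using MTz' f(1) by (auto simp: z'_def)
      moreover have "dual_obj E V z' = S" unfolding dual_obj_def z'_def using sfE by simp
      ultimately show ?thesis by blast
    qed
    have dS: "dual_obj E V z = S"
    proof -
      have "dual_obj E V z \<le> S" using ex zmin by auto
      moreover have "primal_obj V r y \<le> dual_obj E V z"
        using primal_le_MT[OF yfeas zfeas] MT_le_dual[OF fV fE yfeas zfeas] by linarith
      ultimately show ?thesis using OPTge by linarith
    qed
    then show "dual_obj E (A \<union> B) z = sum P (A \<union> B)" using V_def S_def by simp
    show "\<forall>v\<in>A. sum P A / sum P (A \<union> B) * MTvec E (A \<union> B) z v = P v"
    proof
      fix v assume v: "v \<in> A"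
      show "sum P A / sum P (A \<union> B) * MTvec E (A \<union> B) z v = P v"
      proof (cases "a > 0")
        case False
        then have "a = 0" using a0 by simp
        then have "P v = 0" using sum_nonneg_eq_0_iff[OF fA] Pnn v a_def by auto
        then show ?thesis using \<open>a = 0\<close> a_def by simp
      next
        case apos: True
        have "MTvec E V z v = r v"
          using CS[OF fV fE feasA zfeas] objA rAS[OF apos] dS v V_def by simp
        moreover have "a / S * r v = P v"
        proof (cases "b > 0")
          case True then show ?thesis using rA[OF v apos True] apos Spos by simp
        next
          case False then have "b = 0" using b0 by simp
          then show ?thesis using rP False Sab Spos by simp
        qed
        ultimately show ?thesis using a_def S_def V_def by simp
      qed
    qed
    show "\<forall>v\<in>B. sum P B / sum P (A \<union> B) * MTvec E (A \<union> B) z v = P v"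
    proof
      fix v assume v: "v \<in> B"
      show "sum P B / sum P (A \<union> B) * MTvec E (A \<union> B) z v = P v"
      proof (cases "b > 0")
        case False
        then have "b = 0" using b0 by simp
        then have "P v = 0" using sum_nonneg_eq_0_iff[OF fB] Pnn v b_def by auto
        then show ?thesis using \<open>b = 0\<close> b_def by simp
      next
        case bpos: True
        have "MTvec E V z v = r v"
          using CS[OF fV fE feasB zfeas] objB rBS[OF bpos] dS v V_def by simp
        moreover have "b / S * r v = P v"
        proof (cases "a > 0")
          case True then show ?thesis using rB[OF v True bpos] bpos Spos by simp
        next
          case False then have "a = 0" using a0 by simp
          then show ?thesis using rP False Sab Spos by simp
        qed
        ultimately show ?thesis using b_def S_def V_def by simp
      qed
    qed
  qed
qed

end
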